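(* Let $\nu$ be a class (ii) distribution with associated functions $f,\varphi,\Phi$, let $\theta>1$, and suppose that for all constants $\alpha\ge0$ and $s\in(0,1)$, \[\liminf_{x\to\infty}\frac{\Phi^{-1}(\varphi(x)-\alpha\log x)}{x^s}>0.\] Let $\eta$ be a distribution with density $g$ such that $\liminf_{x\to\infty}x^{t+1}g(x)>0$ for some $t\in(1,\theta)$. Then $D_{F_\Phi}(\eta|\nu)=\infty$. Moreover, the displayed condition holds whenever $\nu$ is a generalized lognormal distribution with $r>1$ and $\Phi(x)=\frac{1}{r\sigma^r}\log(x)^r$.
   Context: Densities are written $f=e^{-\varphi}$. For strictly convex $F$ with $F(1)=0$, $D_F(\eta|\nu)=\int_0^\infty F(g/f)f\,dx$ if $\eta\ll\nu$ and $+\infty$ otherwise. Class (ii): $\lim_{x\to\infty}\varphi(x)/x=0$, $\lim_{x\to\infty}\varphi(x)/\log x=\infty$, and there exist $\bar x>0$ and $\Phi:\mathbb R_+\to\mathbb R$ positive, strictly concave, twice differentiable and increasing on $[\bar x,\infty)$ such that, with $\Phi^{-1}$ the inverse of $\Phi|_{[\bar x,\infty)}$, $0<\liminf_{x\to\infty}\Phi^{-1}(\varphi(x))/x\le\limsup_{x\to\infty}\Phi^{-1}(\varphi(x))/x<\infty$. With $\bar y=\exp(\Phi(\bar x))$: $F_\Phi(y)=y\log y$ for $y\le\bar y$ and $F_\Phi(y)=a\,y\,\Phi^{-1}(\log y)^\theta+b$ for $y>\bar y$, where $a=\frac{1+\log\bar y}{\Phi^{-1}(\log\bar y)^\theta+\theta\Phi^{-1}(\log\bar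 y)^{\theta-1}(\Phi^{-1})'(\log\bar y)}$, $b=\bar y\log\bar y-a\bar y\Phi^{-1}(\log\bar y)^\theta$. The generalized lognormal density is $f(x)=\frac{1}{Zx}\exp(-\frac{1}{r\sigma^r}|\log x-\mu|^r)$, $x>0$, with $Z=2r^{1/r}\sigma\Gamma(1+1/r)$, $r>1$, $\sigma>0$, $\mu\in\mathbb R$. *)

theory Defs
  imports "HOL-Analysis.Analysis"
begin

definition strictly_concave_on :: "real set \<Rightarrow> (real \<Rightarrow> real) \<Rightarrow> bool" where
  "strictly_concave_on S h \<longleftrightarrow>
     (\<forall>x\<in>S. \<forall>y\<in>S. \<forall>u. x \<noteq> y \<and> 0 < u \<and> u < 1 \<longrightarrow>
        h (u * x + (1 - u) * y) > u * h x + (1 - u) * h y)"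

definition dens_measure :: "(real \<Rightarrow> real) \<Rightarrow> real measure" where
  "dens_measure d = density lborel (\<lambda>x. ennreal (indicator {0<..} x * d x))"

definition is_density :: "(real \<Rightarrow> real) \<Rightarrow> bool" where
  "is_density d \<longleftrightarrow> d \<in> borel_measurable borel \<and> (\<forall>x>0. d x \<ge> 0)
     \<and> (\<integral>\<^sup>+x. ennreal (indicator {0<..} x * d x) \<partial>lborel) = 1"

definition ext_integral :: "real measure \<Rightarrow> (real \<Rightarrow> real) \<Rightarrow> ereal" where
  "ext_integral M h =
    (let P = (\<integral>\<^sup>+x. ennreal (h x) \<partial>M); N = (\<integral>\<^sup>+x. ennreal (- h x) \<partial>M)
     in if P = \<infinity> \<and> N = \<infinity> then undefined else enn2ereal P - enn2ereal N)"

(* D_F(eta|nu), eta with density g, nu with density f, both on (0,oo) *)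
definition f_divergence :: "(real \<Rightarrow> real) \<Rightarrow> (real \<Rightarrow> real) \<Rightarrow> (real \<Rightarrow> real) \<Rightarrow> ereal" where
  "f_divergence F g f =
    (if absolutely_continuous (dens_measure f) (dens_measure g)
     then ext_integral lborel (\<lambda>x. indicator {0<..} x * (F (g x / f x) * f x))
     else \<infinity>)"

definition Phi_inv :: "(real \<Rightarrow> real) \<Rightarrow> real \<Rightarrow> real \<Rightarrow> real" where
  "Phi_inv Phi xb = the_inv_into {xb..} Phi"

definition class_ii :: "(real \<Rightarrow> real) \<Rightarrow> (real \<Rightarrow> real) \<Rightarrow> real \<Rightarrow> bool" where
  "class_ii phi Phi xb \<longleftrightarrow>
     is_density (\<lambda>x. exp (- phi x))
   \<and> ((\<lambda>x. phi x / x) \<longlongrightarrow> 0) at_top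
   \<and> filterlim (\<lambda>x. phi x / ln x) at_top at_top
   \<and> xb > 0
   \<and> (\<forall>x\<ge>xb. Phi x > 0)
   \<and> strictly_concave_on {xb..} Phi
   \<and> strict_mono_on {xb..} Phi
   \<and> (\<exists>Phi' Phi''. \<forall>x\<ge>xb. (Phi has_real_derivative Phi' x) (at x within {xb..})
                         \<and> (Phi' has_real_derivative Phi'' x) (at x within {xb..}))
   \<and> (\<forall>\<^sub>F x in at_top. phi x \<in> Phi ` {xb..})
   \<and> 0 < Liminf at_top (\<lambda>x. ereal (Phi_inv Phi xb (phi x) / x))
   \<and> Limsup at_top (\<lambda>x. ereal (Phi_inv Phi xb (phi x) / x)) < \<infinity>"

definition F_Phi :: "(real \<Rightarrow> real) \<Rightarrow> real \<Rightarrow> real \<Rightarrow> real \<Rightarrow> real" where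
  "F_Phi Phi xb \<theta> y =
    (let yb = exp (Phi xb); Pinv = Phi_inv Phi xb;
         d = (THE d. (Pinv has_real_derivative d) (at (ln yb) within {ln yb..}));
         a = (1 + ln yb) / (Pinv (ln yb) powr \<theta> + \<theta> * Pinv (ln yb) powr (\<theta> - 1) * d);
         b = yb * ln yb - a * yb * Pinv (ln yb) powr \<theta>
     in if y \<le> yb then y * ln y else a * y * Pinv (ln y) powr \<theta> + b)"

definition lognormal_Z :: "real \<Rightarrow> real \<Rightarrow> real" where
  "lognormal_Z r \<sigma> = 2 * r powr (1 / r) * \<sigma> * Gamma (1 + 1 / r)"

definition gen_lognormal :: "real \<Rightarrow> real \<Rightarrow> real \<Rightarrow> real \<Rightarrow> real" where
  "gen_lognormal r \<sigma> \<mu> x =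
     1 / (lognormal_Z r \<sigma> * x) * exp (- (1 / (r * \<sigma> powr r)) * \<bar>ln x - \<mu>\<bar> powr r)"

end

theory Submission
  imports Defs
begin

lemma classii_facts:
  assumes cl: "class_ii phi Phi xb"
  shows "xb > 0" "Phi xb > 0" "continuous_on {xb..} Phi"
    "\<And>z. z \<ge> xb \<Longrightarrow> Phi_inv Phi xb (Phi z) = z"
    "\<And>y. y \<ge> Phi xb \<Longrightarrow> Phi_inv Phi xb y \<ge> xb \<and> Phi (Phi_inv Phi xb y) = y"
    "\<And>y1 y2. Phi xb \<le> y1 \<Longrightarrow> y1 \<le> y2 \<Longrightarrow> Phi_inv Phi xb y1 \<le> Phi_inv Phi xb y2"
proof -
  have xb: "xb > 0" and pos: "\<forall>x\<ge>xb. Phi x > 0" and sm: "strict_mono_on {xb..} Phi"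
    and lim: "filterlim (\<lambda>x. phi x / ln x) at_top at_top"
    and evr: "\<forall>\<^sub>F x in at_top. phi x \<in> Phi ` {xb..}"
    using cl unfolding class_ii_def by auto
  obtain Phi' Phi'' where der: "\<And>x. x \<ge> xb \<Longrightarrow> (Phi has_real_derivative Phi' x) (at x within {xb..})"
    using cl unfolding class_ii_def by blast
  show "xb > 0" by fact
  show "Phi xb > 0" using pos by simp
  show cont: "continuous_on {xb..} Phi"
    unfolding continuous_on_eq_continuous_within using der by (blast intro: DERIV_continuous)
  have inj: "inj_on Phi {xb..}" using sm by (rule strict_mono_on_imp_inj_on)
  show inv1: "Phi_inv Phi xb (Phi z) = z" if "z \<ge> xb" for z
    unfolding Phi_inv_def using inj that by (simp add: the_inv_into_f_f)
  have unb: "\<exists>z\<ge>xb. Phi z \<ge> M" for M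
  proof -
    have "eventually (\<lambda>x. phi x / ln x \<ge> 1) at_top" using lim by (simp add: filterlim_at_top)
    moreover have "eventually (\<lambda>x. x \<ge> max (exp M) 3) at_top" by (rule eventually_ge_at_top)
    ultimately have "eventually (\<lambda>x. phi x \<ge> M \<and> phi x \<in> Phi ` {xb..}) at_top" using evr
    proof eventually_elim
      case (elim x)
      have x0: "x > 0" using elim by auto
      have "ln x \<ge> ln 3" using elim by auto
      moreover have "ln (3::real) > 0" by simp
      ultimately have lx: "ln x > 0" by linarith
      have "ln x \<ge> M" using elim x0 by (metis exp_le_cancel_iff exp_ln max.bounded_iff)
      moreover have "phi x \<ge> ln x" using elim lx by (simp add: field_simps)
      ultimately show ?case using elim by auto
    qed
    then have "\<exists>x. phi x \<ge> M \<and> phi x \<in> Phi ` {xb..}"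
      using eventually_happens[of _ "at_top :: real filter"] by auto
    then obtain x where "phi x \<ge> M" "phi x \<in> Phi ` {xb..}" by blast
    then show ?thesis by auto
  qed
  have surj: "\<exists>z\<ge>xb. Phi z = y" if yy: "y \<ge> Phi xb" for y
  proof -
    obtain z where z: "z \<ge> xb" "Phi z \<ge> y" using unb by blast
    have "continuous_on {xb..z} Phi" using cont by (rule continuous_on_subset) auto
    then obtain x where "xb \<le> x" "x \<le> z" "Phi x = y" using IVT'[of Phi xb y z] yy z by auto
    then show ?thesis by auto
  qed
  show inv2: "Phi_inv Phi xb y \<ge> xb \<and> Phi (Phi_inv Phi xb y) = y" if "y \<ge> Phi xb" for y
    using surj[OF that] inv1 by auto
  show "Phi_inv Phi xb y1 \<le> Phi_inv Phi xb y2" if "Phi xb \<le> y1" "y1 \<le> y2" for y1 y2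
  proof (rule ccontr)
    assume "\<not> ?thesis"
    then have "Phi (Phi_inv Phi xb y2) < Phi (Phi_inv Phi xb y1)"
      using inv2[of y1] inv2[of y2] that by (intro strict_mono_onD[OF sm]) auto
    then show False using inv2[of y1] inv2[of y2] that by auto
  qed
qed

lemma classii_deriv:
  assumes cl: "class_ii phi Phi xb"
  shows "(THE d. (Phi_inv Phi xb has_real_derivative d) (at (Phi xb) within {Phi xb..})) > 0"
proof -
  note F = classii_facts[OF cl]
  have sm: "strict_mono_on {xb..} Phi" and sc: "strictly_concave_on {xb..} Phi"
    using cl unfolding class_ii_def by auto
  obtain Phi' Phi'' where der: "\<And>x. x \<ge> xb \<Longrightarrow> (Phi has_real_derivative Phi' x) (at x within {xb..})"
    using cl unfolding class_ii_def by blast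
  define D where "D = Phi' xb"
  have derxb: "(Phi has_real_derivative D) (at xb within {xb..})" using der by (simp add: D_def)
  define m where "m = Phi (xb+1) - Phi xb"
  have m: "m > 0" using strict_mono_onD[OF sm, of xb "xb+1"] by (simp add: m_def)
  have lim: "((\<lambda>y. (Phi y - Phi xb) / (y - xb)) \<longlongrightarrow> D) (at_right xb)"
    using derxb by (simp add: has_field_derivative_iff at_within_Ici_at_right)
  have ev: "eventually (\<lambda>y. m \<le> (Phi y - Phi xb) / (y - xb)) (at_right xb)"
    unfolding eventually_at_right_field
  proof (intro exI[of _ "xb+1"] conjI allI impI)
    fix y assume y: "xb < y" "y < xb + 1"
    define u where "u = y - xb"
    have u: "0 < u" "u < 1" using y by (auto simp: u_def)
    have "Phi (u * (xb+1) + (1 - u) * xb) > u * Phi (xb+1) + (1-u) * Phi xb"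
      using sc u unfolding strictly_concave_on_def by (auto simp: F(1))
    moreover have "u * (xb+1) + (1 - u) * xb = y" by (simp add: u_def algebra_simps)
    ultimately have "Phi y - Phi xb > u * m" by (simp add: m_def algebra_simps)
    then show "m \<le> (Phi y - Phi xb) / (y - xb)" using u by (simp add: u_def field_simps)
  qed simp
  have D: "D > 0" using tendsto_lowerbound[OF lim ev] m by simp
  define y1 where "y1 = Phi (xb+1)"
  have y1: "Phi xb < y1" using m by (simp add: m_def y1_def)
  have img: "Phi ` {xb..xb+1} = {Phi xb..y1}"
  proof
    show "Phi ` {xb..xb+1} \<subseteq> {Phi xb..y1}"
    proof
      fix y assume "y \<in> Phi ` {xb..xb+1}"
      then obtain z where z: "z \<in> {xb..xb+1}" "y = Phi z" by auto
      have "Phi xb \<le> Phi z" using z strict_mono_onD[OF sm, of xb z] by (cases "z = xb") auto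
      moreover have "Phi z \<le> y1" using z strict_mono_onD[OF sm, of z "xb+1"]
        by (cases "z = xb+1") (auto simp: y1_def)
      ultimately show "y \<in> {Phi xb..y1}" using z by auto
    qed
    show "{Phi xb..y1} \<subseteq> Phi ` {xb..xb+1}"
    proof
      fix y assume y: "y \<in> {Phi xb..y1}"
      have "continuous_on {xb..xb+1} Phi" using F(3) by (rule continuous_on_subset) auto
      then obtain x where "xb \<le> x" "x \<le> xb+1" "Phi x = y"
        using IVT'[of Phi xb y "xb+1"] y by (auto simp: y1_def)
      then show "y \<in> Phi ` {xb..xb+1}" by auto
    qed
  qed
  have gf: "\<And>x. x \<in> {xb..xb+1} \<Longrightarrow> Phi_inv Phi xb (Phi x) = x" using F(4) by auto
  have contg: "continuous_on (Phi ` {xb..xb+1}) (Phi_inv Phi xb)"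
    using F(3) gf by (intro continuous_on_inv) (auto intro: continuous_on_subset)
  have contg': "continuous (at (Phi xb) within Phi ` {xb..xb+1}) (Phi_inv Phi xb)"
    using contg img y1 by (simp add: continuous_on_eq_continuous_within)
  have der1: "(Phi has_derivative (*) D) (at xb within {xb..xb+1})"
    using has_field_derivative_subset[OF derxb, of "{xb..xb+1}"] by (auto simp: has_field_derivative_def)
  have "(Phi_inv Phi xb has_derivative (*) (inverse D)) (at (Phi xb) within Phi ` {xb..xb+1})"
    by (rule has_derivative_inverse_within[OF der1 contg']) (use D gf in \<open>auto simp: fun_eq_iff\<close>)
  moreover have "at (Phi xb) within Phi ` {xb..xb+1} = at (Phi xb) within {Phi xb..}"
    unfolding img by (rule at_within_nhd[of _ "{..<y1}"]) (use y1 in auto)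
  ultimately have dg: "(Phi_inv Phi xb has_real_derivative inverse D) (at (Phi xb) within {Phi xb..})"
    by (simp add: has_field_derivative_def mult.commute)
  have nb: "at (Phi xb) within {Phi xb..} \<noteq> bot" by (simp add: at_within_Ici_at_right)
  have "(THE d. (Phi_inv Phi xb has_real_derivative d) (at (Phi xb) within {Phi xb..})) = inverse D"
  proof (rule the_equality)
    fix d assume "(Phi_inv Phi xb has_real_derivative d) (at (Phi xb) within {Phi xb..})"
    then show "d = inverse D" using dg nb vector_derivative_unique_within
      by (metis has_real_derivative_iff_has_vector_derivative)
  qed (rule dg)
  then show ?thesis using D by simp
qed

lemma nn_int_powr_infinite:
  fixes C X e :: real
  assumes C: "C > 0" and X: "X \<ge> 1" and e: "e > -1"
  shows "(\<integral>\<^sup>+x. ennreal (C * x powr e * indicator {X..} x) \<partial>lborel) = \<infinity>"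
proof (rule ccontr)
  define I where "I = (\<integral>\<^sup>+x. ennreal (C * x powr e * indicator {X..} x) \<partial>lborel)"
  assume "\<not> (\<integral>\<^sup>+x. ennreal (C * x powr e * indicator {X..} x) \<partial>lborel) = \<infinity>"
  then have "I \<noteq> \<infinity>" by (simp add: I_def)
  then obtain R where R: "0 \<le> R" "I = ennreal R" by (cases I rule: ennreal_cases) auto
  define e' where "e' = min e 0"
  define q where "q = 1 + e'"
  have q: "q > 0" using e by (simp add: q_def e'_def)
  define A where "A = R/C + X + 1"
  have "R/C \<ge> 0" using R C by simp
  then have A: "A > 0" using X by (simp add: A_def)
  define Y where "Y = max X (A powr (1/q))"
  have Y1: "Y \<ge> 1" "X \<le> Y" using X by (auto simp: Y_def)
  have YA: "Y powr q \<ge> A"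
  proof -
    have "Y powr q \<ge> (A powr (1/q)) powr q" using q by (intro powr_mono2) (auto simp: Y_def)
    also have "(A powr (1/q)) powr q = A" using A q by (simp add: powr_powr)
    finally show ?thesis .
  qed
  have Ye: "Y powr e' \<le> 1" using powr_mono[of e' 0 Y] Y1 by (simp add: e'_def)
  have bnd: "ennreal (C * Y powr e' * indicator {X..Y} x) \<le> ennreal (C * x powr e * indicator {X..} x)" for x
  proof (cases "x \<in> {X..Y}")
    case True
    then have x1: "x \<ge> 1" using X by auto
    have "x powr e' \<le> x powr e" using x1 by (intro powr_mono) (auto simp: e'_def)
    moreover have "Y powr e' \<le> x powr e'" using True x1 by (intro powr_mono2') (auto simp: e'_def)
    ultimately show ?thesis using True C by (auto intro!: ennreal_leI)
  qed (simp)
  have "(\<integral>\<^sup>+x. ennreal (C * Y powr e' * indicator {X..Y} x) \<partial>lborel) \<le> I"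
    unfolding I_def by (intro nn_integral_mono bnd)
  moreover have "(\<integral>\<^sup>+x. ennreal (C * Y powr e' * indicator {X..Y} x) \<partial>lborel)
      = (\<integral>\<^sup>+x. ennreal (C * Y powr e') * indicator {X..Y} x \<partial>lborel)"
    by (intro nn_integral_cong) (auto split: split_indicator)
  moreover have "\<dots> = ennreal (C * Y powr e') * ennreal (Y - X)"
    using Y1 by (simp add: nn_integral_cmult_indicator)
  moreover have "\<dots> = ennreal (C * Y powr e' * (Y - X))"
    using C Y1 by (simp add: ennreal_mult)
  moreover have "C * Y powr e' * (Y - X) > R"
  proof -
    have "Y powr e' * Y = Y powr q" using Y1 by (simp add: q_def powr_add add.commute)
    then have "Y powr e' * (Y - X) = Y powr q - X * Y powr e'" by (simp add: algebra_simps)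
    also have "\<dots> \<ge> A - X"
    proof -
      have "X * Y powr e' \<le> X * 1" using Ye X by (intro mult_left_mono) auto
      then show ?thesis using YA by linarith
    qed
    finally have "C * (Y powr e' * (Y - X)) \<ge> C * (A - X)" using C by (intro mult_left_mono) auto
    moreover have "C * (A - X) = R + C" using C by (simp add: A_def field_simps)
    ultimately show ?thesis using C by (simp add: mult.assoc)
  qed
  ultimately have "ennreal R < I"
    using R by (smt (verit) ennreal_less_iff order_less_le_trans)
  then show False using R by simp
qed

lemma part1:
  fixes phi Phi g :: "real \<Rightarrow> real" and xb \<theta> t :: real
  assumes cl: "class_ii phi Phi xb" and th: "\<theta> > 1"
   and H: "\<forall>\<alpha> s. \<alpha> \<ge> 0 \<and> 0 < s \<and> s < 1 \<longrightarrow>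
                0 < Liminf at_top (\<lambda>x. ereal (Phi_inv Phi xb (phi x - \<alpha> * ln x) / x powr s))"
   and gd: "is_density g" and t: "1 < t" "t < \<theta>"
   and lg: "0 < Liminf at_top (\<lambda>x. ereal (x powr (t + 1) * g x))"
  shows "f_divergence (F_Phi Phi xb \<theta>) g (\<lambda>x. exp (- phi x)) = \<infinity>"
proof -
  note F = classii_facts[OF cl]
  define y0 where "y0 = Phi xb"
  have y0: "y0 > 0" using F(2) by (simp add: y0_def)
  define Pinv where "Pinv = Phi_inv Phi xb"
  define d where "d = (THE d. (Pinv has_real_derivative d) (at y0 within {y0..}))"
  have d: "d > 0" using classii_deriv[OF cl] by (simp add: d_def Pinv_def y0_def)
  have Py0: "Pinv y0 = xb" using F(4)[of xb] by (simp add: Pinv_def y0_def)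
  define a where "a = (1 + y0) / (Pinv y0 powr \<theta> + \<theta> * Pinv y0 powr (\<theta> - 1) * d)"
  define b where "b = exp y0 * y0 - a * exp y0 * Pinv y0 powr \<theta>"
  have Feq: "F_Phi Phi xb \<theta> y = (if y \<le> exp y0 then y * ln y else a * y * Pinv (ln y) powr \<theta> + b)" for y
    by (simp add: F_Phi_def Let_def a_def b_def d_def Pinv_def y0_def)
  have a: "a > 0"
  proof -
    have p1: "Pinv y0 powr \<theta> > 0" using Py0 F(1) by simp
    have p2: "\<theta> * Pinv y0 powr (\<theta> - 1) * d \<ge> 0" using th d by simp
    have "Pinv y0 powr \<theta> + \<theta> * Pinv y0 powr (\<theta> - 1) * d > 0" using p1 p2 by linarith
    moreover have "1 + y0 > 0" using y0 by simp
    ultimately show ?thesis unfolding a_def by (rule divide_pos_pos[rotated])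
  qed
  have Flow: "F_Phi Phi xb \<theta> y \<ge> -(1 + \<bar>b\<bar>)" if y: "y \<ge> 0" for y
  proof (cases "y \<le> exp y0")
    case True
    have "y * ln y \<ge> -1"
    proof (cases "y = 0")
      case False
      then have yp: "y > 0" using y by simp
      have "ln (1/y) \<le> 1/y - 1" using yp by (intro ln_le_minus_one) simp
      then have "- ln y \<le> 1/y - 1" using yp by (simp add: ln_div)
      then have "y * (- ln y) \<le> y * (1/y - 1)" using yp by (intro mult_left_mono) auto
      then show ?thesis using yp y by (simp add: algebra_simps)
    qed simp
    then show ?thesis using True Feq[of y] by simp
  next
    case False
    have "a * y * Pinv (ln y) powr \<theta> \<ge> 0" using a y by simp
    then show ?thesis using False Feq[of y] by simp
  qed
  define f where "f = (\<lambda>x. exp (- phi x))"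
  have fpos: "f x > 0" for x by (simp add: f_def)
  have fdens: "is_density f" using cl by (simp add: class_ii_def f_def)
  have fm: "f \<in> borel_measurable lborel" using fdens by (simp add: is_density_def)
  have fint: "(\<integral>\<^sup>+x. ennreal (indicator {0<..} x * f x) \<partial>lborel) = 1"
    using fdens by (simp add: is_density_def)
  have gnn: "\<And>x. x > 0 \<Longrightarrow> g x \<ge> 0" using gd by (simp add: is_density_def)
  define hh where "hh = (\<lambda>x. indicator {0<..} x * (F_Phi Phi xb \<theta> (g x / f x) * f x))"
  define P where "P = (\<integral>\<^sup>+x. ennreal (hh x) \<partial>lborel)"
  define N where "N = (\<integral>\<^sup>+x. ennreal (- hh x) \<partial>lborel)"
  have Nb: "ennreal (- hh x) \<le> ennreal (1 + \<bar>b\<bar>) * ennreal (indicator {0<..} x * f x)" for x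
  proof (cases "x > 0")
    case True
    have "F_Phi Phi xb \<theta> (g x / f x) \<ge> -(1 + \<bar>b\<bar>)"
      using gnn[OF True] fpos[of x] by (intro Flow) simp
    then have "F_Phi Phi xb \<theta> (g x / f x) * f x \<ge> -(1 + \<bar>b\<bar>) * f x"
      using fpos[of x] by (intro mult_right_mono) auto
    then have "- (F_Phi Phi xb \<theta> (g x / f x) * f x) \<le> (1 + \<bar>b\<bar>) * f x"
      by (simp add: algebra_simps)
    then have "- hh x \<le> (1 + \<bar>b\<bar>) * (indicator {0<..} x * f x)" using True by (simp add: hh_def)
    then have "ennreal (- hh x) \<le> ennreal ((1 + \<bar>b\<bar>) * (indicator {0<..} x * f x))"
      by (rule ennreal_leI)
    also have "\<dots> = ennreal (1+\<bar>b\<bar>) * ennreal (indicator {0<..} x * f x)"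
      using fpos[of x] by (intro ennreal_mult) auto
    finally show ?thesis .
  qed (simp add: hh_def)
  have "N \<le> (\<integral>\<^sup>+x. ennreal (1 + \<bar>b\<bar>) * ennreal (indicator {0<..} x * f x) \<partial>lborel)"
    unfolding N_def by (intro nn_integral_mono Nb)
  also have "\<dots> = ennreal (1 + \<bar>b\<bar>) * 1"
    using fm fint by (subst nn_integral_cmult) auto
  finally have Nle: "N \<le> ennreal (1 + \<bar>b\<bar>) * 1" .
  have Nfin: "N \<noteq> \<infinity>"
  proof
    assume "N = \<infinity>"
    then have "top \<le> ennreal (1 + \<bar>b\<bar>)" using Nle by simp
    then show False by (simp add: top_unique)
  qed
  obtain c0 where c0: "0 < ereal c0" "ereal c0 < Liminf at_top (\<lambda>x. ereal (x powr (t + 1) * g x))"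
    using ereal_dense2[OF lg] by blast
  have c0p: "c0 > 0" using c0(1) by simp
  have ev1: "eventually (\<lambda>x. c0 < x powr (t + 1) * g x) at_top"
    using less_LiminfD[OF c0(2)] by simp
  define s where "s = (t/\<theta> + 1)/2"
  have s: "0 < s" "s < 1" "s * \<theta> > t" using t th by (auto simp: s_def field_simps)
  have "0 < Liminf at_top (\<lambda>x. ereal (Phi_inv Phi xb (phi x - (t+2) * ln x) / x powr s))"
    using H s t by auto
  then obtain c1 where c1: "0 < ereal c1" "ereal c1 < Liminf at_top (\<lambda>x. ereal (Pinv (phi x - (t+2) * ln x) / x powr s))"
    using ereal_dense2 unfolding Pinv_def by blast
  have c1p: "c1 > 0" using c1(1) by simp
  have ev2: "eventually (\<lambda>x. c1 < Pinv (phi x - (t+2) * ln x) / x powr s) at_top"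
    using less_LiminfD[OF c1(2)] by simp
  have ev3: "eventually (\<lambda>x. t + 3 \<le> phi x / ln x) at_top"
    using cl unfolding class_ii_def filterlim_at_top by blast
  define X where "X = max (exp (y0+1)) (max (1/c0) (max ((1/c1) powr (1/s)) (2*\<bar>b\<bar>/(a*c0))))"
  have ev4: "eventually (\<lambda>x. X \<le> x) at_top" by (rule eventually_ge_at_top)
  define C where "C = a * c0 * c1 powr \<theta> / 2"
  have Cp: "C > 0" using a c0p c1p by (simp add: C_def)
  define e where "e = s * \<theta> - t - 1"
  have "eventually (\<lambda>x. hh x \<ge> C * x powr e) at_top"
    using ev1 ev2 ev3 ev4
  proof eventually_elim
    case (elim x)
    have xX: "x \<ge> exp (y0+1)" "x \<ge> 1/c0" "x \<ge> (1/c1) powr (1/s)" "x \<ge> 2*\<bar>b\<bar>/(a*c0)"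
      using elim(4) by (auto simp: X_def)
    have "exp (y0+1) > 1" using y0 by simp
    then have x1: "x > 1" using xX by linarith
    then have x0: "x > 0" by simp
    have lx: "ln x \<ge> y0 + 1" using xX x0 by (simp add: ln_ge_iff)
    have lxp: "ln x > 0" using lx y0 by linarith
    have xt1: "x powr (t+1) > 0" using x0 by simp
    have gl: "g x > c0 / x powr (t+1)" using elim(1) xt1 by (simp add: field_simps)
    have gp: "g x > 0" using gl c0p xt1 by (smt (verit) divide_pos_pos)
    define w where "w = phi x - (t+2) * ln x"
    have phil: "phi x \<ge> (t+3) * ln x" using elim(3) lxp by (simp add: pos_le_divide_eq)
    have wl: "w \<ge> ln x" using phil by (simp add: w_def algebra_simps)
    have wy0: "w \<ge> y0" using wl lx by linarith
    define v where "v = ln (g x / f x)"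
    have v: "v = ln (g x) + phi x" using gp fpos[of x] by (simp add: v_def ln_div f_def)
    have cx: "c0 / x powr (t+1) > 0" using c0p xt1 by simp
    have "ln (g x) \<ge> ln (c0 / x powr (t+1))" using gl cx gp by (subst ln_le_cancel_iff) auto
    also have "ln (c0 / x powr (t+1)) = ln c0 - (t+1) * ln x" using c0p x0 by (simp add: ln_div ln_powr)
    finally have lg1: "ln (g x) \<ge> ln c0 - (t+1) * ln x" .
    have "c0 * x \<ge> 1" using xX(2) c0p by (simp add: field_simps)
    then have "ln (c0 * x) \<ge> 0" by simp
    then have "ln c0 + ln x \<ge> 0" using c0p x0 by (simp add: ln_mult)
    then have vw: "v \<ge> w" using v lg1 by (simp add: w_def algebra_simps)
    define PP where "PP = Pinv v"
    have PPw: "PP \<ge> Pinv w" using F(6)[of w v] wy0 vw by (simp add: PP_def Pinv_def y0_def)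
    have xs: "x powr s > 0" using x0 by simp
    have Pw: "Pinv w > c1 * x powr s" using elim(2) xs by (simp add: w_def field_simps)
    have "x powr s \<ge> ((1/c1) powr (1/s)) powr s" using xX(3) s by (intro powr_mono2) auto
    also have "((1/c1) powr (1/s)) powr s = 1/c1" using s c1p by (simp add: powr_powr)
    finally have "c1 * x powr s \<ge> 1" using c1p by (simp add: field_simps)
    define B where "B = c1 * x powr s"
    have B1: "B \<ge> 1" using \<open>c1 * x powr s \<ge> 1\<close> by (simp add: B_def)
    have PPB: "PP \<ge> B" using PPw Pw by (simp add: B_def)
    have PPt: "PP powr \<theta> \<ge> B powr \<theta>" using PPB B1 th by (intro powr_mono2) auto
    have Bt: "B powr \<theta> = c1 powr \<theta> * x powr (s * \<theta>)"
      using c1p x0 by (simp add: B_def powr_mult powr_powr)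
    have Bt1: "B powr \<theta> \<ge> 1" using B1 th by (intro ge_one_powr_ge_zero) auto
    define y where "y = g x / f x"
    have yp: "y > 0" using gp fpos[of x] by (simp add: y_def)
    have yv: "y = exp v" using yp by (simp add: v_def y_def)
    have ny: "\<not> y \<le> exp y0" using yv vw wy0 lx wl by simp
    have lny: "ln y = v" by (simp add: y_def v_def)
    have hx: "hh x = a * g x * PP powr \<theta> + b * f x"
    proof -
      have yf: "y * f x = g x" using fpos[of x] by (simp add: y_def)
      have "hh x = (a * y * PP powr \<theta> + b) * f x"
        using x0 ny Feq[of y] lny by (simp add: hh_def y_def[symmetric] PP_def)
      also have "\<dots> = a * (y * f x) * PP powr \<theta> + b * f x"
        by (simp add: algebra_simps)
      finally show ?thesis using yf by simp
    qed
    have fx: "f x \<le> 1 / x powr (t+2)"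
    proof -
      have "f x = exp (- phi x)" by (simp add: f_def)
      also have "\<dots> \<le> exp (- ((t+2) * ln x))" using phil lxp by (simp add: algebra_simps)
      also have "\<dots> = 1 / x powr (t+2)" using x0 by (simp add: powr_def exp_minus inverse_eq_divide)
      finally show ?thesis .
    qed
    have "x powr (1 + (t+1)) = x powr 1 * x powr (t+1)" by (rule powr_add)
    then have e1: "x powr (1+(t+1)) = x * x powr (t+1)" using x0 by simp
    have t2: "t + 2 = 1 + (t+1)" by simp
    have xt2: "x powr (t+2) = x * x powr (t+1)" by (subst t2) (rule e1)
    have "\<bar>b\<bar> * f x \<le> \<bar>b\<bar> / x powr (t+2)" using fx by (simp add: mult_left_mono divide_inverse)
    also have "\<bar>b\<bar> / x powr (t+2) \<le> (a * c0 / 2) / x powr (t+1)"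
    proof -
      have "2 * \<bar>b\<bar> \<le> a * c0 * x" using xX(4) a c0p by (simp add: field_simps)
      then have "\<bar>b\<bar> \<le> (a * c0 / 2) * x" by simp
      then show ?thesis using xt2 xt1 x0 by (simp add: field_simps)
    qed
    also have "(a * c0 / 2) / x powr (t+1) \<le> (a / 2) * g x"
    proof -
      have "(a/2) * (c0 / x powr (t+1)) \<le> (a/2) * g x" using gl a by (intro mult_left_mono) auto
      moreover have "(a*c0/2)/x powr (t+1) = (a/2) * (c0 / x powr (t+1))" by simp
      ultimately show ?thesis by simp
    qed
    also have "(a / 2) * g x \<le> (a / 2) * g x * PP powr \<theta>"
    proof -
      have "(a/2) * g x * 1 \<le> (a/2) * g x * PP powr \<theta>"
        using PPt Bt1 a gp by (intro mult_left_mono) auto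
      then show ?thesis by simp
    qed
    finally have bf0: "\<bar>b\<bar> * f x \<le> (a / 2) * g x * PP powr \<theta>" .
    have "- \<bar>b\<bar> * f x \<le> b * f x" using fpos[of x] by (intro mult_right_mono) auto
    then have bf: "b * f x \<ge> - ((a / 2) * g x * PP powr \<theta>)" using bf0 by linarith
    have "hh x \<ge> (a / 2) * g x * PP powr \<theta>" using hx bf by simp
    also have "(a / 2) * g x * PP powr \<theta> \<ge> (a / 2) * (c0 / x powr (t+1)) * (c1 powr \<theta> * x powr (s * \<theta>))"
      using gl PPt Bt a c0p xt1 gp by (intro mult_mono) auto
    also have "(a / 2) * (c0 / x powr (t+1)) * (c1 powr \<theta> * x powr (s * \<theta>)) = C * x powr e"
      using x0 by (simp add: C_def e_def powr_diff field_simps)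
    finally show ?case .
  qed
  then obtain X2 where X2: "\<And>x. x \<ge> X2 \<Longrightarrow> hh x \<ge> C * x powr e"
    unfolding eventually_at_top_linorder by blast
  define X3 where "X3 = max X2 1"
  have "(\<integral>\<^sup>+x. ennreal (C * x powr e * indicator {X3..} x) \<partial>lborel) = \<infinity>"
    using Cp s t by (intro nn_int_powr_infinite) (auto simp: X3_def e_def)
  moreover have "(\<integral>\<^sup>+x. ennreal (C * x powr e * indicator {X3..} x) \<partial>lborel) \<le> P"
    unfolding P_def
  proof (intro nn_integral_mono)
    fix x
    show "ennreal (C * x powr e * indicator {X3..} x) \<le> ennreal (hh x)"
    proof (cases "x \<in> {X3..}")
      case True
      then show ?thesis using X2[of x] by (intro ennreal_leI) (auto simp: X3_def)
    qed simp
  qed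
  ultimately have Pinf: "P = \<infinity>" by (simp add: top_unique)
  have "ext_integral lborel hh = \<infinity>"
    using Pinf Nfin unfolding ext_integral_def Let_def P_def[symmetric] N_def[symmetric]
    by (cases N rule: ennreal_cases) auto
  then show ?thesis unfolding f_divergence_def hh_def f_def by simp
qed


lemma part2:
  fixes r \<sigma> \<mu> xb \<alpha> s :: real
  assumes r: "r>1" and sg: "\<sigma>>0" and xb: "xb>1" and al: "\<alpha>\<ge>0" and s: "0<s" "s<1"
  shows "0 < Liminf at_top (\<lambda>x. ereal
                   (Phi_inv (\<lambda>x. (1 / (r * \<sigma> powr r)) * ln x powr r) xb
                      ((\<lambda>x. - ln (gen_lognormal r \<sigma> \<mu> x)) x - \<alpha> * ln x) / x powr s))"
proof -
  define c where "c = 1 / (r * \<sigma> powr r)"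
  have c: "c > 0" using r sg by (simp add: c_def)
  define Z where "Z = lognormal_Z r \<sigma>"
  have "1 + 1/r > 0" using r by (simp add: add_pos_pos)
  then have Z: "Z > 0" using r sg by (simp add: Z_def lognormal_Z_def)
  define Phi where "Phi = (\<lambda>x::real. c * ln x powr r)"
  have inj: "inj_on Phi {xb..}"
  proof (rule inj_onI)
    fix u v assume u: "u \<in> {xb..}" and v: "v \<in> {xb..}" and e: "Phi u = Phi v"
    have "ln u > 0" "ln v > 0" using u v xb by auto
    from e c have "ln u powr r = ln v powr r" by (simp add: Phi_def)
    then have "(ln u powr r) powr (1/r) = (ln v powr r) powr (1/r)" by simp
    then have "ln u = ln v" using \<open>ln u > 0\<close> \<open>ln v > 0\<close> r by (simp add: powr_powr)
    then show "u = v" using u v xb by simp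
  qed
  have inv: "Phi_inv Phi xb y = exp ((y/c) powr (1/r))" if y: "y \<ge> c * ln xb powr r" for y
  proof -
    have y0: "y/c \<ge> ln xb powr r" using y c by (simp add: field_simps)
    have yc: "y/c \<ge> 0" using y0 by (smt (verit) powr_ge_zero)
    have "(y/c) powr (1/r) \<ge> (ln xb powr r) powr (1/r)"
      using y0 r by (intro powr_mono2) auto
    also have "(ln xb powr r) powr (1/r) = ln xb" using xb r by (simp add: powr_powr)
    finally have "exp (ln xb) \<le> exp ((y/c) powr (1/r))" by simp
    then have ge: "exp ((y/c) powr (1/r)) \<ge> xb" using xb by simp
    have "y \<ge> 0" using y c by (smt (verit) mult_nonneg_nonneg powr_ge_zero)
    then have "c * ((y/c) powr (1/r)) powr r = y" using yc r c by (simp add: powr_powr)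
    then have "Phi (exp ((y/c) powr (1/r))) = y" by (simp add: Phi_def)
    then show ?thesis unfolding Phi_inv_def using inj ge
      by (intro the_inv_into_f_eq) auto
  qed
  have phi: "- ln (gen_lognormal r \<sigma> \<mu> x) = ln Z + ln x + c * \<bar>ln x - \<mu>\<bar> powr r" if x: "x > 0" for x
  proof -
    have "gen_lognormal r \<sigma> \<mu> x = 1 / (Z * x) * exp (- c * \<bar>ln x - \<mu>\<bar> powr r)"
      by (simp add: gen_lognormal_def Z_def c_def)
    also have "ln \<dots> = - ln Z - ln x - c * \<bar>ln x - \<mu>\<bar> powr r"
      using Z x by (simp add: ln_mult ln_div)
    finally show ?thesis by simp
  qed
  define l where "l = (1+s)/2"
  have l: "s < l" "l < 1" "0 < l" using s by (auto simp: l_def)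
  have lr: "s powr r < l powr r" using l s r by (intro powr_less_mono2) auto
  define K where "K = (\<bar>1-\<alpha>\<bar> + \<bar>ln Z\<bar>)/c"
  define M where "M = K / (l powr r - s powr r)"
  have K: "K \<ge> 0" using c by (simp add: K_def)
  have M: "M \<ge> 0" using K lr by (simp add: M_def)
  define L0 where "L0 = max 1 (max (\<mu>/(1-l)) (max (ln xb / s) (M powr (1/(r-1)))))"
  have ev: "eventually (\<lambda>x. x \<ge> exp L0) at_top" by simp
  have "eventually (\<lambda>x. 1 \<le> ereal (Phi_inv Phi xb (- ln (gen_lognormal r \<sigma> \<mu> x) - \<alpha> * ln x) / x powr s)) at_top"
    using ev
  proof eventually_elim
    case (elim x)
    have x0: "x > 0" using elim by (smt (verit) exp_gt_zero)
    define L where "L = ln x"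
    have LL0: "L \<ge> L0" using elim x0 unfolding L_def by (metis exp_le_cancel_iff exp_ln)
    have L1: "L \<ge> 1" using LL0 by (simp add: L0_def)
    have Lmu: "L * (1-l) \<ge> \<mu>" using LL0 l by (simp add: L0_def field_simps)
    have Lxb: "s * L \<ge> ln xb" using LL0 s by (simp add: L0_def field_simps)
    have LM: "L powr (r-1) \<ge> M"
    proof -
      have "L powr (r-1) \<ge> (M powr (1/(r-1))) powr (r-1)"
        using LL0 r by (intro powr_mono2) (auto simp: L0_def)
      also have "(M powr (1/(r-1))) powr (r-1) = M" using M r
        by (cases "M = 0") (auto simp: powr_powr)
      finally show ?thesis .
    qed
    have a1: "\<bar>L-\<mu>\<bar> powr r \<ge> (l*L) powr r"
      using Lmu l L1 r by (intro powr_mono2) (auto simp: algebra_simps)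
    have a2: "(l*L) powr r = l powr r * L powr r" using l L1 by (simp add: powr_mult)
    have a3: "L powr r = L * L powr (r-1)" using L1 by (simp add: powr_diff)
    have a4: "(l powr r - s powr r) * L powr r \<ge> K * L"
    proof -
      have b1: "(l powr r - s powr r) * L powr (r-1) \<ge> (l powr r - s powr r) * M"
        using LM lr by (intro mult_left_mono) auto
      have b0: "(l powr r - s powr r) * M = K" using lr by (simp add: M_def)
      have b2: "L * ((l powr r - s powr r) * L powr (r-1)) \<ge> L * K"
        using b1 b0 L1 by (intro mult_left_mono) auto
      have "(l powr r - s powr r) * L powr r = L * ((l powr r - s powr r) * L powr (r-1))"
        using a3 by (simp only: mult.assoc mult.left_commute)
      then show ?thesis using b2 by (simp only: mult.commute)
    qed
    have a5: "K * L \<ge> (\<bar>1-\<alpha>\<bar> * L + \<bar>ln Z\<bar>) / c"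
    proof -
      have "\<bar>ln Z\<bar> \<le> \<bar>ln Z\<bar> * L" using L1 by (simp add: mult_le_cancel_left1)
      then show ?thesis using c by (simp add: K_def field_simps)
    qed
    define y where "y = ln Z + L + c * \<bar>L - \<mu>\<bar> powr r - \<alpha> * L"
    have yc: "y / c = \<bar>L - \<mu>\<bar> powr r + ((1-\<alpha>)*L + ln Z)/c"
      using c by (simp add: y_def field_simps)
    have "((1-\<alpha>)*L + ln Z)/c \<ge> - ((\<bar>1-\<alpha>\<bar> * L + \<bar>ln Z\<bar>) / c)"
    proof -
      have "\<bar>(1-\<alpha>)*L\<bar> = \<bar>1-\<alpha>\<bar> * L" using L1 by (simp add: abs_mult)
      then have "(1-\<alpha>)*L \<ge> - (\<bar>1-\<alpha>\<bar> * L)"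
        using abs_ge_minus_self[of "(1-\<alpha>)*L"] by linarith
      then have "(1-\<alpha>)*L + ln Z \<ge> - (\<bar>1-\<alpha>\<bar> * L + \<bar>ln Z\<bar>)" by linarith
      then have "- (\<bar>1-\<alpha>\<bar> * L + \<bar>ln Z\<bar>) / c \<le> ((1-\<alpha>)*L + ln Z) / c"
        using c by (intro divide_right_mono) auto
      then show ?thesis by (simp only: minus_divide_left)
    qed
    then have ys: "y / c \<ge> s powr r * L powr r"
      using yc a1 a2 a4 a5 by (simp add: algebra_simps)
    have sLr: "s powr r * L powr r = (s*L) powr r" using s L1 by (simp add: powr_mult)
    have yxb: "y \<ge> c * ln xb powr r"
    proof -
      have "ln xb powr r \<le> (s*L) powr r" using Lxb xb r by (intro powr_mono2) auto
      then have "ln xb powr r \<le> y / c" using ys sLr by simp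
      then show ?thesis using c by (simp add: field_simps)
    qed
    have "(y/c) powr (1/r) \<ge> ((s*L) powr r) powr (1/r)"
      using ys sLr r s L1 by (intro powr_mono2) auto
    also have "((s*L) powr r) powr (1/r) = s * L" using s L1 r by (simp add: powr_powr)
    finally have "exp ((y/c) powr (1/r)) \<ge> exp (s * L)" by simp
    also have "exp (s*L) = x powr s" using x0 by (simp add: L_def powr_def)
    finally have "Phi_inv Phi xb y / x powr s \<ge> 1"
      using inv[OF yxb] x0 by simp
    moreover have "- ln (gen_lognormal r \<sigma> \<mu> x) - \<alpha> * ln x = y"
      using phi[OF x0] by (simp add: y_def L_def)
    ultimately show ?case by simp
  qed
  then have lim1: "1 \<le> Liminf at_top (\<lambda>x. ereal (Phi_inv Phi xb (- ln (gen_lognormal r \<sigma> \<mu> x) - \<alpha> * ln x) / x powr s))"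
    by (rule Liminf_bounded)
  have "(0::ereal) < 1" by simp
  from order.strict_trans2[OF this lim1] show ?thesis unfolding Phi_def c_def .
qed


theorem mainTheorem8:
  shows "(\<forall>phi Phi xb \<theta> g t.
            class_ii phi Phi xb \<and> \<theta> > 1
          \<and> (\<forall>\<alpha> s. \<alpha> \<ge> 0 \<and> 0 < s \<and> s < 1 \<longrightarrow>
                0 < Liminf at_top (\<lambda>x. ereal (Phi_inv Phi xb (phi x - \<alpha> * ln x) / x powr s)))
          \<and> is_density g \<and> 1 < t \<and> t < \<theta>
          \<and> 0 < Liminf at_top (\<lambda>x. ereal (x powr (t + 1) * g x))
          \<longrightarrow> f_divergence (F_Phi Phi xb \<theta>) g (\<lambda>x. exp (- phi x)) = \<infinity>)
       \<and> (\<forall>r \<sigma> \<mu> xb. r > 1 \<and> \<sigma> > 0 \<and> xb > 1 \<longrightarrow>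
            (\<forall>\<alpha> s. \<alpha> \<ge> 0 \<and> 0 < s \<and> s < 1 \<longrightarrow>
                0 < Liminf at_top (\<lambda>x. ereal
                   (Phi_inv (\<lambda>x. (1 / (r * \<sigma> powr r)) * ln x powr r) xb
                      ((\<lambda>x. - ln (gen_lognormal r \<sigma> \<mu> x)) x - \<alpha> * ln x) / x powr s))))"
proof (intro conjI allI impI)
  fix phi Phi xb \<theta> g t
  assume "class_ii phi Phi xb \<and> \<theta> > 1
          \<and> (\<forall>\<alpha> s. \<alpha> \<ge> 0 \<and> 0 < s \<and> s < 1 \<longrightarrow>
                0 < Liminf at_top (\<lambda>x. ereal (Phi_inv Phi xb (phi x - \<alpha> * ln x) / x powr s)))
          \<and> is_density g \<and> 1 < t \<and> t < \<theta>
          \<and> 0 < Liminf at_top (\<lambda>x. ereal (x powr (t + 1) * g x))"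
  then show "f_divergence (F_Phi Phi xb \<theta>) g (\<lambda>x. exp (- phi x)) = \<infinity>"
    by (elim conjE) (rule part1)
next
  fix r \<sigma> \<mu> xb \<alpha> s :: real
  assume "r > 1 \<and> \<sigma> > 0 \<and> xb > 1" "\<alpha> \<ge> 0 \<and> 0 < s \<and> s < 1"
  then show "0 < Liminf at_top (\<lambda>x. ereal
                   (Phi_inv (\<lambda>x. (1 / (r * \<sigma> powr r)) * ln x powr r) xb
                      ((\<lambda>x. - ln (gen_lognormal r \<sigma> \<mu> x)) x - \<alpha> * ln x) / x powr s))"
    using part2 by auto
qed

end
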